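(* Let $f(z)=z+a_2z^2+a_3z^3+\cdots$ be analytic on $\mathbb{D}$, and set $a_1=1$. Let $c_{j,k}$ ($j,k\ge0$) be its Grunsky coefficients. Then for all $j\ge0$ and $k\ge1$, $$c_{j,k}=\sum_{l=1}^{k-1}\frac{l}{k}a_{k-l}c_{j+1,l}-\sum_{m=1}^{j}a_{m+1}c_{j-m,k}-\frac{a_{j+k+1}}{k}.$$
   Context: $\mathbb{D}=\{z\in\mathbb{C}:|z|<1\}$. The Grunsky coefficients $c_{j,k}$ of $f$ are defined by the expansion $\log\frac{f(z)-f(w)}{z-w}=-\sum_{j,k=0}^\infty c_{j,k}z^jw^k$, valid for $|z|,|w|<\varepsilon$ with $\varepsilon>0$ small enough (the branch of the logarithm taking the value $0$ at $z=w=0$). *)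

theory Defs
  imports "HOL-Complex_Analysis.Complex_Analysis"
begin

definition taylor_coeff :: "(complex \<Rightarrow> complex) \<Rightarrow> nat \<Rightarrow> complex" where
  "taylor_coeff f n = (deriv ^^ n) f 0 / fact n"

definition diff_quot :: "(complex \<Rightarrow> complex) \<Rightarrow> complex \<Rightarrow> complex \<Rightarrow> complex" where
  "diff_quot f z w = (if z = w then deriv f z else (f z - f w) / (z - w))"

text \<open>c is the family of Grunsky coefficients of f: for some eps > 0 and all
  |z|,|w| < eps, log((f z - f w)/(z - w)) = - sum c_{j,k} z^j w^k, where the
  logarithm is the principal one (which near z = w = 0, where the quotient is
  near f'(0) = 1, is the branch taking the value 0 at z = w = 0).\<close>
definition grunsky_coeffs :: "(complex \<Rightarrow> complex) \<Rightarrow> (nat \<Rightarrow> nat \<Rightarrow> complex) \<Rightarrow> bool" where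
  "grunsky_coeffs f c \<longleftrightarrow> (\<exists>\<epsilon>>0. \<forall>z w. norm z < \<epsilon> \<and> norm w < \<epsilon> \<longrightarrow>
      ((\<lambda>(j,k). c j k * z ^ j * w ^ k) has_sum (- Ln (diff_quot f z w))) UNIV)"

end

theory Submission
  imports Defs
begin


lemma fps_exp_cong:
  assumes "f has_fps_expansion F" "eventually (\<lambda>z. f z = g z) (nhds 0)"
  shows "g has_fps_expansion F"
  using assms unfolding has_fps_expansion_def
  by (auto elim: eventually_mono[OF eventually_conj])

lemma fps_exp_unique:
  fixes f :: "complex \<Rightarrow> complex"
  assumes "f has_fps_expansion F" "f has_fps_expansion G"
  shows "F = G"
  by (rule fps_ext) (simp add: fps_nth_fps_expansion[OF assms(1)] fps_nth_fps_expansion[OF assms(2)])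

lemma fps_exp_unique_at:
  fixes f g :: "complex \<Rightarrow> complex"
  assumes "f has_fps_expansion F" "g has_fps_expansion G"
    and ev: "eventually (\<lambda>z. f z = g z) (at 0)"
  shows "F = G"
proof -
  let ?h = "\<lambda>z. f z - g z"
  have h: "?h has_fps_expansion F - G"
    using assms by (intro has_fps_expansion_diff)
  have "isCont ?h 0" using has_fps_expansion_imp_continuous[OF h, of UNIV] by simp
  hence l1: "(?h \<longlongrightarrow> ?h 0) (at 0)" by (simp add: isCont_def)
  have "eventually (\<lambda>z. ?h z = 0) (at 0)" using ev by eventually_elim simp
  hence l2: "(?h \<longlongrightarrow> 0) (at 0)" by (simp add: tendsto_eventually)
  have "?h 0 = 0" using tendsto_unique[OF _ l1 l2] by simp
  hence "eventually (\<lambda>z. ?h z = 0) (nhds 0)"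
    using \<open>eventually (\<lambda>z. ?h z = 0) (at 0)\<close> by (simp add: eventually_nhds_conv_at)
  hence "(\<lambda>z. 0) has_fps_expansion F - G"
    by (rule fps_exp_cong[OF h])
  hence "F - G = 0" using fps_exp_unique has_fps_expansion_0 by blast
  thus ?thesis by simp
qed


lemma grunsky_split:
  fixes c :: "nat \<Rightarrow> nat \<Rightarrow> complex"
  assumes e: "\<epsilon> > 0"
    and H: "\<And>z w. norm z < \<epsilon> \<Longrightarrow> norm w < \<epsilon> \<Longrightarrow> ((\<lambda>(j,k). c j k * z ^ j * w ^ k) has_sum L z w) UNIV"
  shows "norm z < \<epsilon> \<Longrightarrow> (\<lambda>j. c j k * z ^ j) sums (\<Sum>\<^sub>\<infinity>j. c j k * z ^ j)"
    and "norm z < \<epsilon> \<Longrightarrow> norm w < \<epsilon> \<Longrightarrow> (\<lambda>k. (\<Sum>\<^sub>\<infinity>j. c j k * z ^ j) * w ^ k) sums L z w"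
proof -
  have sw: "((\<lambda>(k,j). c j k * z ^ j * w ^ k) has_sum L z w) (UNIV \<times> UNIV)"
    if "norm z < \<epsilon>" "norm w < \<epsilon>" for z w
  proof -
    have "((\<lambda>(j,k). c j k * z ^ j * w ^ k) has_sum L z w) (UNIV \<times> UNIV)"
      using H[OF that] by simp
    thus ?thesis by (subst (asm) has_sum_swap) (simp add: case_prod_unfold)
  qed
  have summ: "(\<lambda>j. c j k * z ^ j) summable_on UNIV" if z: "norm z < \<epsilon>" for z k
  proof -
    define w0 where "w0 = (of_real (\<epsilon>/2) :: complex)"
    have w0: "norm w0 < \<epsilon>" "w0 \<noteq> 0" using e by (auto simp: w0_def)
    have "(\<lambda>(k,j). c j k * z ^ j * w0 ^ k) summable_on (UNIV \<times> UNIV)"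
      using sw[OF z w0(1)] by (auto simp: summable_on_def)
    hence "(\<lambda>j. c j k * z ^ j * w0 ^ k) summable_on UNIV"
      using summable_on_SigmaD1[of "\<lambda>k j. c j k * z ^ j * w0 ^ k" UNIV "\<lambda>_. UNIV" k] by simp
    hence "(\<lambda>j. c j k * z ^ j * w0 ^ k * inverse (w0 ^ k)) summable_on UNIV"
      by (rule summable_on_cmult_left)
    moreover have "c j k * z ^ j * w0 ^ k * inverse (w0 ^ k) = c j k * z ^ j" for j
      using w0 by (simp add: field_simps)
    ultimately show ?thesis by simp
  qed
  show "norm z < \<epsilon> \<Longrightarrow> (\<lambda>j. c j k * z ^ j) sums (\<Sum>\<^sub>\<infinity>j. c j k * z ^ j)"
    by (intro has_sum_imp_sums has_sum_infsum summ)
  assume z: "norm z < \<epsilon>" and w: "norm w < \<epsilon>"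
  have "((\<lambda>k. \<Sum>\<^sub>\<infinity>j. c j k * z ^ j * w ^ k) has_sum L z w) UNIV"
  proof (rule has_sum_Sigma'[where f="\<lambda>(k,j). c j k * z ^ j * w ^ k" and a="L z w" and A=UNIV and B="\<lambda>_. UNIV"])
    show "((\<lambda>(k,j). c j k * z ^ j * w ^ k) has_sum L z w) (UNIV \<times> UNIV)" using sw[OF z w] .
    fix k :: nat
    show "((\<lambda>j. (\<lambda>(k,j). c j k * z ^ j * w ^ k) (k, j)) has_sum (\<Sum>\<^sub>\<infinity>j. c j k * z ^ j * w ^ k)) UNIV"
      using summable_on_cmult_left[OF summ[OF z, of k], of "w ^ k"] by (simp add: has_sum_infsum)
  qed
  moreover have "(\<Sum>\<^sub>\<infinity>j. c j k * z ^ j * w ^ k) = (\<Sum>\<^sub>\<infinity>j. c j k * z ^ j) * w ^ k" for k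
    by (rule infsum_cmult_left) (rule summ[OF z])
  ultimately show "(\<lambda>k. (\<Sum>\<^sub>\<infinity>j. c j k * z ^ j) * w ^ k) sums L z w"
    by (intro has_sum_imp_sums) simp
qed


lemma dq_bound:
  fixes f :: "complex \<Rightarrow> complex"
  assumes holo: "f holomorphic_on ball 0 1" and d: "deriv f 0 = 1"
  obtains r where "r > 0" "r \<le> 1"
    "\<And>z w. norm z < r \<Longrightarrow> norm w < r \<Longrightarrow> z \<noteq> w \<Longrightarrow> norm ((f z - f w) / (z - w) - 1) \<le> 1/2"
proof -
  have "deriv f holomorphic_on ball 0 1" using holo by (intro holomorphic_deriv) auto
  hence "continuous_on (ball 0 1) (deriv f)" by (rule holomorphic_on_imp_continuous_on)
  hence "isCont (deriv f) 0" by (simp add: continuous_on_eq_continuous_at)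
  then obtain r1 where r1: "r1 > 0" "\<And>x. dist x 0 < r1 \<Longrightarrow> dist (deriv f x) (deriv f 0) < 1/2"
    unfolding continuous_at_eps_delta by (metis half_gt_zero_iff zero_less_one)
  define r where "r = min r1 1"
  have r: "r > 0" "r \<le> 1" using r1 by (auto simp: r_def)
  show ?thesis
  proof (rule that[OF r])
    fix z w :: complex assume z: "norm z < r" and w: "norm w < r" and zw: "z \<noteq> w"
    have "norm ((\<lambda>v. f v - v) z - (\<lambda>v. f v - v) w) \<le> 1/2 * norm (z - w)"
    proof (rule field_differentiable_bound[where S="ball 0 r" and f'="\<lambda>v::complex. deriv f v - 1"])
      show "convex (ball (0::complex) r)" by simp
      fix v :: complex assume v: "v \<in> ball 0 r"
      hence v1: "v \<in> ball 0 1" using r by auto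
      have "(f has_field_derivative deriv f v) (at v within ball 0 r)"
        by (rule holomorphic_derivI[OF holo _ v1]) auto
      thus "((\<lambda>v. f v - v) has_field_derivative deriv f v - 1) (at v within ball 0 r)"
        by (auto intro!: derivative_eq_intros)
      have "dist v 0 < r1" using v r1 by (auto simp: r_def)
      from r1(2)[OF this] show "norm (deriv f v - 1) \<le> 1/2" using d by (simp add: dist_norm)
    qed (use z w in auto)
    hence "norm (f z - f w - (z - w)) \<le> 1/2 * norm (z - w)" by (simp add: algebra_simps)
    moreover have "(f z - f w) / (z - w) - 1 = (f z - f w - (z - w)) / (z - w)"
      using zw by (simp add: field_simps)
    ultimately show "norm ((f z - f w) / (z - w) - 1) \<le> 1/2"
      using zw by (simp add: norm_divide divide_le_eq)
  qed
qed


lemma final_alg: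
  fixes a :: "nat \<Rightarrow> complex" and c :: "nat \<Rightarrow> nat \<Rightarrow> complex"
  assumes k: "k \<ge> 1" and a0: "a 0 = 0" and a1: "a 1 = 1"
    and E: "(\<Sum>i=0..k-1. (if i = 0 then of_nat k * (\<Sum>n=0..j+1. a n * c (j+1-n) k) else 0)
              - a i * of_nat (k-i) * c (j+1) (k-i)) = - a (j+1+k)"
  shows "c j k =
      (\<Sum>l=1..k-1. of_nat l / of_nat k * a (k - l) * c (j + 1) l)
    - (\<Sum>m=1..j. a (m + 1) * c (j - m) k)
    - a (j + k + 1) / of_nat k"
proof -
  define P where "P = (\<Sum>m=1..j. a (m + 1) * c (j - m) k)"
  define Q where "Q = (\<Sum>l=1..k-1. a (k - l) * of_nat l * c (j + 1) l)"
  have s1: "(\<Sum>n=0..j+1. a n * c (j+1-n) k) = c j k + P"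
  proof -
    have "(\<Sum>n=0..j+1. a n * c (j+1-n) k) = a 0 * c (j+1) k + (\<Sum>i=0..j. a (Suc i) * c (j - i) k)"
      using sum.atLeast0_atMost_Suc_shift[of "\<lambda>n. a n * c (j+1-n) k" j] by simp
    also have "(\<Sum>i=0..j. a (Suc i) * c (j - i) k) = a 1 * c j k + (\<Sum>i=Suc 0..j. a (Suc i) * c (j - i) k)"
      by (subst sum.atLeast_Suc_atMost) auto
    finally show ?thesis using a0 a1 by (simp add: P_def)
  qed
  have s2: "(\<Sum>i=0..k-1. a i * of_nat (k-i) * c (j+1) (k-i)) = Q"
  proof -
    have "(\<Sum>i=0..k-1. a i * of_nat (k-i) * c (j+1) (k-i)) = a 0 * of_nat k * c (j+1) k + (\<Sum>i=Suc 0..k-1. a i * of_nat (k-i) * c (j+1) (k-i))"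
      by (subst sum.atLeast_Suc_atMost) auto
    also have "(\<Sum>i=Suc 0..k-1. a i * of_nat (k-i) * c (j+1) (k-i)) = Q"
      unfolding Q_def
      by (rule sum.reindex_bij_witness[where i="\<lambda>l. k - l" and j="\<lambda>i. k - i"]) (use k in \<open>auto simp: of_nat_diff\<close>)
    finally show ?thesis using a0 by simp
  qed
  have "(\<Sum>i=0..k-1. (if i = 0 then of_nat k * (\<Sum>n=0..j+1. a n * c (j+1-n) k) else 0)
              - a i * of_nat (k-i) * c (j+1) (k-i))
        = of_nat k * (c j k + P) - Q"
  proof -
    define X where "X = of_nat k * (\<Sum>n=0..j+1. a n * c (j+1-n) k)"
    define Y where "Y = (\<lambda>i. a i * of_nat (k-i) * c (j+1) (k-i))"
    have "(\<Sum>i=0..k-1. (if i = 0 then X else 0) - Y i) = (\<Sum>i=0..k-1. (if i = 0 then X else 0)) - (\<Sum>i=0..k-1. Y i)"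
      by (rule sum_subtractf)
    also have "(\<Sum>i=0..k-1. (if i = 0 then X else 0)) = X" by simp
    finally show ?thesis unfolding X_def Y_def s1 s2 .
  qed
  with E have E2: "of_nat k * (c j k + P) - Q = - a (j+1+k)" by simp
  have Q2: "(\<Sum>l=1..k-1. of_nat l / of_nat k * a (k - l) * c (j + 1) l) = Q / of_nat k"
    unfolding Q_def by (simp add: sum_divide_distrib mult_ac)
  have kz: "(of_nat k :: complex) \<noteq> 0" using k by simp
  have E3: "Q = of_nat k * (c j k + P) + a (j+1+k)" using E2 by algebra
  show ?thesis unfolding Q2 P_def[symmetric] E3 using kz
    by (simp add: field_simps add_ac)
qed


lemma alg_helper:
  fixes u D e :: complex
  assumes "u \<noteq> 0" "D \<noteq> 0"
  shows "u * (D * - (inverse (D / u) * ((D - e * u) / u ^ 2))) = u * e - D"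
  using assms by (simp add: field_simps power2_eq_square)

theorem lemma3p4:
  fixes f :: "complex \<Rightarrow> complex" and c :: "nat \<Rightarrow> nat \<Rightarrow> complex" and j k :: nat
  assumes "f holomorphic_on ball 0 1"
    and "f 0 = 0" and "deriv f 0 = 1"
    and "grunsky_coeffs f c"
    and "k \<ge> 1"
  shows "c j k =
      (\<Sum>l=1..k-1. of_nat l / of_nat k * taylor_coeff f (k - l) * c (j + 1) l)
    - (\<Sum>m=1..j. taylor_coeff f (m + 1) * c (j - m) k)
    - taylor_coeff f (j + k + 1) / of_nat k"
proof -
  note holo = assms(1) and f0 = assms(2) and d0 = assms(3) and k = assms(5)
  define a where "a = taylor_coeff f"
  define A where "A = fps_expansion f 0"
  have Anth: "A $ n = a n" for n by (simp add: A_def a_def fps_expansion_def taylor_coeff_def)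
  have hA: "f has_fps_expansion A" unfolding A_def
    by (rule has_fps_expansion_fps_expansion[OF _ _ holo]) auto
  have a0: "a 0 = 0" using f0 by (simp add: a_def taylor_coeff_def)
  have a1: "a 1 = 1" using d0 by (simp add: a_def taylor_coeff_def)
  obtain \<epsilon> where e: "\<epsilon> > 0" and H: "\<And>z w. norm z < \<epsilon> \<Longrightarrow> norm w < \<epsilon> \<Longrightarrow>
      ((\<lambda>(j,k). c j k * z ^ j * w ^ k) has_sum (- Ln (diff_quot f z w))) UNIV"
    using assms(4) unfolding grunsky_coeffs_def by blast
  define bb where "bb k z = (\<Sum>\<^sub>\<infinity>j. c j k * z ^ j)" for k z
  have S1: "(\<lambda>j. c j k * z ^ j) sums bb k z" if "norm z < \<epsilon>" for k z
    unfolding bb_def by (rule grunsky_split(1)[OF e H that])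
  have S2: "(\<lambda>k. bb k z * w ^ k) sums (- Ln (diff_quot f z w))" if "norm z < \<epsilon>" "norm w < \<epsilon>" for z w
    unfolding bb_def by (rule grunsky_split(2)[OF e H that])
  obtain r0 where r0: "r0 > 0" "r0 \<le> 1"
    "\<And>z w. norm z < r0 \<Longrightarrow> norm w < r0 \<Longrightarrow> z \<noteq> w \<Longrightarrow> norm ((f z - f w) / (z - w) - 1) \<le> 1/2"
    using dq_bound[OF holo d0] by blast
  have radA: "fps_conv_radius A > 0" using hA by (simp add: has_fps_expansion_def)
  have "eventually (\<lambda>z. z \<in> eball 0 (fps_conv_radius A)) (nhds 0)"
    using radA by (intro eventually_nhds_in_open) (auto simp: zero_ereal_def)
  moreover have "eventually (\<lambda>z. eval_fps A z = f z) (nhds 0)"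
    using hA by (simp add: has_fps_expansion_def)
  ultimately have "eventually (\<lambda>z. z \<in> eball 0 (fps_conv_radius A) \<and> eval_fps A z = f z) (nhds 0)"
    by (rule eventually_conj)
  then obtain r2 where r2: "r2 > 0" "\<And>z. dist z 0 < r2 \<Longrightarrow> z \<in> eball 0 (fps_conv_radius A) \<and> eval_fps A z = f z"
    unfolding eventually_nhds_metric by blast
  have r2': "ereal (norm z) < fps_conv_radius A" "eval_fps A z = f z" if "norm z < r2" for z
    using r2(2)[of z] that by auto
  define R where "R = min (min \<epsilon> r0) r2"
  have R: "R > 0" "R \<le> \<epsilon>" "R \<le> r0" "R \<le> r2" using e r0 r2 by (auto simp: R_def)

  define C where "C l = Abs_fps (\<lambda>j. c j l)" for l
  have K1: "(\<lambda>z. bb l z) has_fps_expansion C l" for l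
  proof (rule has_fps_expansionI)
    have "eventually (\<lambda>u. dist u 0 < \<epsilon>) (nhds (0::complex))"
      using e by (auto simp: eventually_nhds_metric)
    thus "eventually (\<lambda>u. (\<lambda>n. C l $ n * u ^ n) sums bb l u) (nhds 0)"
      by eventually_elim (auto simp: C_def intro!: S1)
  qed
  define B where "B z = Abs_fps (\<lambda>k. bb k z)" for z
  have K2: "(\<lambda>w. - Ln (diff_quot f z w)) has_fps_expansion B z" if z: "norm z < \<epsilon>" for z
  proof (rule has_fps_expansionI)
    have "eventually (\<lambda>u. dist u 0 < \<epsilon>) (nhds (0::complex))"
      using e by (auto simp: eventually_nhds_metric)
    thus "eventually (\<lambda>u. (\<lambda>n. B z $ n * u ^ n) sums (- Ln (diff_quot f z u))) (nhds 0)"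
      by eventually_elim (use S2[OF z] in \<open>auto simp: B_def\<close>)
  qed
  define T where "T m z = eval_fps (fps_shift m A) z" for m z
  have K3s: "(\<lambda>p. a (p + m) * z ^ p) sums T m z" if "norm z < r2" for m z
    using sums_eval_fps[of z "fps_shift m A"] r2'(1)[OF that] by (simp add: T_def Anth)
  have K3: "(\<lambda>z. T m z) has_fps_expansion fps_shift m A" for m
    unfolding T_def using radA by (intro eval_fps_has_fps_expansion) simp
  have K4: "T q z = a q + z * T (Suc q) z" if "norm z < r2" for q z
  proof -
    have "(\<lambda>p. z * (a (p + Suc q) * z ^ p)) sums (z * T (Suc q) z)"
      by (intro sums_mult K3s that)
    hence "(\<lambda>p. a (Suc p + q) * z ^ Suc p) sums (z * T (Suc q) z)"
      by (simp add: mult_ac)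
    hence "(\<lambda>p. a (p + q) * z ^ p) sums (z * T (Suc q) z + a q)"
      by (subst (asm) sums_Suc_iff) simp
    with K3s[OF that, of q] show ?thesis by (simp add: sums_iff add_ac)
  qed
  have K5: "T 0 z = f z" if "norm z < r2" for z
    using r2'(2)[OF that] by (simp add: T_def)
  have Wz: "(fps_const (f z) - A) * fps_deriv (B z) = fps_deriv A - Abs_fps (\<lambda>q. T (Suc q) z)"
    if z: "norm z < R" "z \<noteq> 0" for z
  proof -
    have ze: "norm z < \<epsilon>" and zr0: "norm z < r0" and zr2: "norm z < r2" using z R by auto
    define \<phi> where "\<phi> = (\<lambda>w. - Ln (diff_quot f z w))"
    have h\<phi>: "\<phi> has_fps_expansion B z" unfolding \<phi>_def by (rule K2[OF ze])
    have hd\<phi>: "deriv \<phi> has_fps_expansion fps_deriv (B z)" by (rule has_fps_expansion_deriv[OF h\<phi>])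
    define \<rho> where "\<rho> = norm z"
    have \<rho>: "\<rho> > 0" using z by (simp add: \<rho>_def)
    have eq: "(z - w) * ((f z - f w) * deriv \<phi> w) = (z - w) * deriv f w - (f z - f w)"
      if w: "w \<in> ball 0 \<rho>" for w
    proof -
      have wz: "w \<noteq> z" using w by (auto simp: \<rho>_def)
      have wr0: "norm w < r0" using w z R by (auto simp: \<rho>_def)
      have w1: "w \<in> ball 0 1" using wr0 r0 by auto
      define Q where "Q = (f z - f w) / (z - w)"
      have Qb: "norm (Q - 1) \<le> 1/2" unfolding Q_def using r0(3)[OF zr0 wr0] wz by auto
      have "Re (1 - Q) \<le> norm (1 - Q)" by (rule complex_Re_le_cmod)
      also have "norm (1 - Q) = norm (Q - 1)" by (rule norm_minus_commute)
      finally have ReQ: "Re Q > 0" using Qb by simp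
      hence Qn: "Q \<notin> \<real>\<^sub>\<le>\<^sub>0" by (auto simp: complex_nonpos_Reals_iff)
      have Q0: "Q \<noteq> 0" using ReQ by auto
      have fzw: "f z - f w \<noteq> 0" using Q0 wz by (auto simp: Q_def)
      have df: "(f has_field_derivative deriv f w) (at w)"
        by (rule holomorphic_derivI[OF holo _ w1]) auto
      define h' where "h' = ((f z - f w) - deriv f w * (z - w)) / (z - w)^2"
      have dh: "((\<lambda>v. (f z - f v) / (z - v)) has_field_derivative h') (at w)"
        unfolding h'_def using wz
        by (auto intro!: derivative_eq_intros df simp: field_simps power2_eq_square)
      have dL: "((\<lambda>v. - Ln ((f z - f v) / (z - v))) has_field_derivative - (inverse Q * h')) (at w)"
      proof -
        have "(Ln has_field_derivative inverse Q) (at ((\<lambda>v. (f z - f v) / (z - v)) w))"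
          using has_field_derivative_Ln[OF Qn] by (simp add: Q_def)
        from DERIV_chain2[where f=Ln and g="\<lambda>v. (f z - f v) / (z - v)", OF this dh]
        show ?thesis by (intro DERIV_minus) simp
      qed
      have "(\<phi> has_field_derivative - (inverse Q * h')) (at w)"
      proof (rule has_field_derivative_transform_within_open[OF dL, of "ball 0 \<rho>"])
        fix v :: complex assume "v \<in> ball 0 \<rho>"
        hence "v \<noteq> z" by (auto simp: \<rho>_def)
        thus "- Ln ((f z - f v) / (z - v)) = \<phi> v" by (simp add: \<phi>_def diff_quot_def)
      qed (use w in auto)
      hence "deriv \<phi> w = - (inverse Q * h')" by (rule DERIV_imp_deriv)
      thus ?thesis using alg_helper[of "z - w" "f z - f w" "deriv f w"] wz fzw unfolding h'_def Q_def
        by (simp add: mult.commute)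
    qed
    have e1: "(\<lambda>w. (z - w) * ((f z - f w) * deriv \<phi> w)) has_fps_expansion
               (fps_const z - fps_X) * ((fps_const (f z) - A) * fps_deriv (B z))"
      by (intro has_fps_expansion_mult has_fps_expansion_diff has_fps_expansion_const
                has_fps_expansion_fps_X hA hd\<phi>)
    have e2: "(\<lambda>w. (z - w) * deriv f w - (f z - f w)) has_fps_expansion
               (fps_const z - fps_X) * fps_deriv A - (fps_const (f z) - A)"
      by (intro has_fps_expansion_mult has_fps_expansion_diff has_fps_expansion_const
                has_fps_expansion_fps_X hA has_fps_expansion_deriv)
    have "eventually (\<lambda>w. w \<in> ball 0 \<rho>) (nhds 0)"
      using \<rho> by (intro eventually_nhds_in_open) auto
    hence "eventually (\<lambda>w. (z - w) * ((f z - f w) * deriv \<phi> w) = (z - w) * deriv f w - (f z - f w)) (nhds 0)"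
      by eventually_elim (rule eq)
    from fps_exp_cong[OF e1 this] e2
    have E1: "(fps_const z - fps_X) * ((fps_const (f z) - A) * fps_deriv (B z)) =
              (fps_const z - fps_X) * fps_deriv A - (fps_const (f z) - A)"
      by (rule fps_exp_unique)
    have ER: "fps_const (f z) - A = (fps_const z - fps_X) * Abs_fps (\<lambda>q. T (Suc q) z)"
    proof (rule fps_ext)
      fix q show "(fps_const (f z) - A) $ q = ((fps_const z - fps_X) * Abs_fps (\<lambda>q. T (Suc q) z)) $ q"
      proof (cases q)
        case 0
        thus ?thesis using K4[OF zr2, of 0] K5[OF zr2] a0 by (simp add: algebra_simps Anth)
      next
        case (Suc p)
        thus ?thesis using K4[OF zr2, of q] by (simp add: algebra_simps Anth)
      qed
    qed
    have nz: "fps_const z - fps_X \<noteq> (0 :: complex fps)"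
    proof
      assume "fps_const z - fps_X = (0 :: complex fps)"
      hence "(fps_const z - fps_X) $ 0 = (0 :: complex fps) $ 0" by simp
      thus False using z by simp
    qed
    have "(fps_const z - fps_X) * ((fps_const (f z) - A) * fps_deriv (B z)) =
          (fps_const z - fps_X) * (fps_deriv A - Abs_fps (\<lambda>q. T (Suc q) z))"
      by (subst E1, subst ER) (simp add: right_diff_distrib)
    thus ?thesis using nz by simp
  qed
  define g where "g i z = (if i = 0 then of_nat k * (f z * bb k z) else 0) - a i * of_nat (k - i) * bb (k - i) z" for i z
  have Iz: "(\<Sum>i=0..k-1. g i z) = of_nat k * a k - T k z" if z: "norm z < R" "z \<noteq> 0" for z
  proof -
    have "((fps_const (f z) - A) * fps_deriv (B z)) $ (k - 1) = (fps_deriv A - Abs_fps (\<lambda>q. T (Suc q) z)) $ (k - 1)"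
      using Wz[OF z] by simp
    also have "(fps_deriv A - Abs_fps (\<lambda>q. T (Suc q) z)) $ (k - 1) = of_nat k * a k - T k z"
      using k by (simp add: Anth)
    also have "((fps_const (f z) - A) * fps_deriv (B z)) $ (k - 1) = (\<Sum>i=0..k-1. g i z)"
      unfolding fps_mult_nth
    proof (rule sum.cong)
      fix i assume i: "i \<in> {0..k-1}"
      hence ki: "k - 1 - i + 1 = k - i" using k by auto
      have dB: "fps_deriv (B z) $ (k - 1 - i) = of_nat (k - i) * bb (k - i) z"
        unfolding fps_deriv_nth ki by (simp add: B_def)
      show "(fps_const (f z) - A) $ i * fps_deriv (B z) $ (k - 1 - i) = g i z"
        unfolding dB by (cases "i = 0") (simp_all add: g_def Anth algebra_simps)
    qed simp
    finally show ?thesis .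
  qed
  define G where "G i = (if i = 0 then fps_const (of_nat k) * (A * C k) else 0) - fps_const (a i * of_nat (k - i)) * C (k - i)" for i
  have hg: "g i has_fps_expansion G i" for i
  proof (cases "i = 0")
    case True
    have "(\<lambda>z. of_nat k * (f z * bb k z)) has_fps_expansion fps_const (of_nat k) * (A * C k)"
      by (intro has_fps_expansion_cmult_left has_fps_expansion_mult hA K1)
    thus ?thesis using True a0 by (simp add: g_def[abs_def] G_def)
  next
    case False
    have "(\<lambda>z. 0 - a i * of_nat (k - i) * bb (k - i) z) has_fps_expansion G i"
      unfolding G_def using False
      by (intro has_fps_expansion_diff has_fps_expansion_cmult_left has_fps_expansion_0 K1) simp
    thus ?thesis using False by (simp add: g_def[abs_def])
  qed
  have e1: "(\<lambda>z. \<Sum>i=0..k-1. g i z) has_fps_expansion (\<Sum>i=0..k-1. G i)"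
    by (intro has_fps_expansion_sum hg)
  have e2: "(\<lambda>z. of_nat k * a k - T k z) has_fps_expansion fps_const (of_nat k * a k) - fps_shift k A"
    by (intro has_fps_expansion_diff has_fps_expansion_const K3)
  have ev: "eventually (\<lambda>z. (\<Sum>i=0..k-1. g i z) = of_nat k * a k - T k z) (at 0)"
    unfolding eventually_at using R Iz by (intro exI[of _ R]) (auto simp: dist_norm)
  have EF: "(\<Sum>i=0..k-1. G i) = fps_const (of_nat k * a k) - fps_shift k A"
    by (rule fps_exp_unique_at[OF e1 e2 ev])
  have "(\<Sum>i=0..k-1. G i) $ (j+1) = - a (j+1+k)"
    unfolding EF by (simp add: Anth add_ac)
  moreover have "(\<Sum>i=0..k-1. G i) $ (j+1) = (\<Sum>i=0..k-1. (if i = 0 then of_nat k * (\<Sum>n=0..j+1. a n * c (j+1-n) k) else 0)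
              - a i * of_nat (k-i) * c (j+1) (k-i))"
    unfolding fps_sum_nth
  proof (rule sum.cong)
    fix i :: nat
    show "G i $ (j + 1) = (if i = 0 then of_nat k * (\<Sum>n=0..j+1. a n * c (j+1-n) k) else 0)
              - a i * of_nat (k-i) * c (j+1) (k-i)"
    proof -
      have AC: "(A * C k) $ (j+1) = (\<Sum>n=0..j+1. a n * c (j+1-n) k)"
        unfolding fps_mult_nth by (simp add: C_def Anth)
      show ?thesis
      proof (cases "i = 0")
        case True
        have "G i $ (j+1) = of_nat k * (A * C k) $ (j+1) - a 0 * of_nat k * C k $ (j+1)"
          using True by (simp add: G_def)
        then show ?thesis using True a0 unfolding AC by simp
      next
        case False
        thus ?thesis by (simp add: G_def C_def)
      qed
    qed
  qed simp
  ultimately have "(\<Sum>i=0..k-1. (if i = 0 then of_nat k * (\<Sum>n=0..j+1. a n * c (j+1-n) k) else 0)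
              - a i * of_nat (k-i) * c (j+1) (k-i)) = - a (j+1+k)" by simp
  from final_alg[OF k a0 a1 this] show ?thesis by (simp add: a_def)
qed

end
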